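(* Let $k>l\ge0$ be integers, $\xi\in\mathbb{C}$, $f:\mathbb{N}\to[0,\infty)$, and $A=\xi(a^\dagger)^ka^l+\xi^*(a^\dagger)^la^k+f(a^\dagger a)$ with domain $\mathcal{D}_0$. Then $A$ has equal deficiency indices $\dim\operatorname{Ran}(A+i)^\perp=\dim\operatorname{Ran}(A-i)^\perp$, and thus admits self-adjoint extensions.
   Context: $\mathbb{N}=\{0,1,2,\dots\}$. $\mathcal{H}$ is a separable complex Hilbert space with orthonormal basis $(\phi_n)_{n\in\mathbb{N}}$; $\mathcal{D}_0$ is the set of finite linear combinations of the $\phi_n$. The operators $a,a^\dagger$ have domain $\mathcal{D}_0$ and act by $a\phi_n=\sqrt{n}\,\phi_{n-1}$ ($a\phi_0=0$), $a^\dagger\phi_n=\sqrt{n+1}\,\phi_{n+1}$, extended linearly. $f(a^\dagger a)$ has domain $\mathcal{D}_0$ and $f(a^\dagger a)\phi_n=f(n)\phi_n$. *)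

theory Defs
  imports "HOL-Analysis.Analysis"
begin

text \<open>The Hilbert space H is realised as l2(N): coefficient sequences
  x :: nat => complex w.r.t. the orthonormal basis phi_n (phi_n = indicator of n),
  with square-summable modulus.\<close>

definition l2 :: "(nat \<Rightarrow> complex) set" where
  "l2 = {x. summable (\<lambda>n. (cmod (x n))\<^sup>2)}"

definition l2_inner :: "(nat \<Rightarrow> complex) \<Rightarrow> (nat \<Rightarrow> complex) \<Rightarrow> complex" where
  "l2_inner x y = (\<Sum>n. cnj (x n) * y n)"

definition D0 :: "(nat \<Rightarrow> complex) set" where
  "D0 = {x. finite {n. x n \<noteq> 0}}"

text \<open>Annihilation operator: a phi_n = sqrt n phi_(n-1), a phi_0 = 0.\<close>
definition ann :: "(nat \<Rightarrow> complex) \<Rightarrow> (nat \<Rightarrow> complex)" where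
  "ann x = (\<lambda>m. complex_of_real (sqrt (real (Suc m))) * x (Suc m))"

text \<open>Creation operator: a^dagger phi_n = sqrt (n+1) phi_(n+1).\<close>
definition cre :: "(nat \<Rightarrow> complex) \<Rightarrow> (nat \<Rightarrow> complex)" where
  "cre x = (\<lambda>m. if m = 0 then 0 else complex_of_real (sqrt (real m)) * x (m - 1))"

text \<open>f(a^dagger a) phi_n = f(n) phi_n.\<close>
definition numfun :: "(nat \<Rightarrow> real) \<Rightarrow> (nat \<Rightarrow> complex) \<Rightarrow> (nat \<Rightarrow> complex)" where
  "numfun f x = (\<lambda>m. complex_of_real (f m) * x m)"

definition opA :: "nat \<Rightarrow> nat \<Rightarrow> complex \<Rightarrow> (nat \<Rightarrow> real)
    \<Rightarrow> (nat \<Rightarrow> complex) \<Rightarrow> (nat \<Rightarrow> complex)" where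
  "opA k l \<xi> f x = (\<lambda>m. \<xi> * (cre ^^ k) ((ann ^^ l) x) m
                       + cnj \<xi> * (cre ^^ l) ((ann ^^ k) x) m
                       + numfun f x m)"

text \<open>Orthogonal complement of Ran(T + c) for T with domain D0, inside l2.\<close>
definition defect_space :: "((nat \<Rightarrow> complex) \<Rightarrow> (nat \<Rightarrow> complex)) \<Rightarrow> complex
    \<Rightarrow> (nat \<Rightarrow> complex) set" where
  "defect_space T c = {\<psi> \<in> l2. \<forall>\<phi>\<in>D0. l2_inner \<psi> (\<lambda>m. T \<phi> m + c * \<phi> m) = 0}"

definition is_onb :: "(nat \<Rightarrow> complex) set \<Rightarrow> (nat \<Rightarrow> complex) set \<Rightarrow> bool" where
  "is_onb M B \<longleftrightarrow> B \<subseteq> M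
     \<and> (\<forall>b\<in>B. \<forall>b'\<in>B. l2_inner b b' = (if b = b' then 1 else 0))
     \<and> (\<forall>\<psi>\<in>M. (\<forall>b\<in>B. l2_inner b \<psi> = 0) \<longrightarrow> \<psi> = (\<lambda>_. 0))"

definition same_hilbert_dim :: "(nat \<Rightarrow> complex) set \<Rightarrow> (nat \<Rightarrow> complex) set \<Rightarrow> bool" where
  "same_hilbert_dim M N \<longleftrightarrow>
     (\<exists>B C g. is_onb M B \<and> is_onb N C \<and> bij_betw g B C)"

definition selfadjoint_op :: "(nat \<Rightarrow> complex) set \<Rightarrow> ((nat \<Rightarrow> complex) \<Rightarrow> (nat \<Rightarrow> complex)) \<Rightarrow> bool" where
  "selfadjoint_op D T \<longleftrightarrow>
     D \<subseteq> l2 \<and> (\<forall>x\<in>D. T x \<in> l2)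
     \<and> (\<forall>x\<in>D. \<forall>y\<in>D. \<forall>c. (\<lambda>n. x n + c * y n) \<in> D
            \<and> T (\<lambda>n. x n + c * y n) = (\<lambda>n. T x n + c * T y n))
     \<and> (\<forall>\<psi>\<in>l2. \<psi> \<in> D \<longleftrightarrow> (\<exists>\<eta>\<in>l2. \<forall>\<phi>\<in>D. l2_inner \<psi> (T \<phi>) = l2_inner \<eta> \<phi>))
     \<and> (\<forall>\<psi>\<in>D. \<forall>\<phi>\<in>D. l2_inner \<psi> (T \<phi>) = l2_inner (T \<psi>) \<phi>)"

end

theory Submission
  imports Defs
begin


definition sm :: "(nat \<Rightarrow> complex) \<Rightarrow> (nat \<Rightarrow> complex) \<Rightarrow> bool" where
  "sm x y = summable (\<lambda>n. cnj (x n) * y n)"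

lemma sm_D0_right: "y \<in> D0 \<Longrightarrow> sm x y"
  unfolding sm_def D0_def by (rule summable_finite[of "{n. y n \<noteq> 0}"]) auto

lemma sm_D0_left: "x \<in> D0 \<Longrightarrow> sm x y"
  unfolding sm_def D0_def by (rule summable_finite[of "{n. x n \<noteq> 0}"]) auto

lemma prod_bound: "cmod (cnj a * b) \<le> (cmod a)^2 + (cmod b)^2"
proof -
  have "0 \<le> (cmod a - cmod b)^2" by simp
  then have "2 * (cmod a * cmod b) \<le> (cmod a)^2 + (cmod b)^2"
    by (simp add: power2_eq_square algebra_simps)
  moreover have "0 \<le> cmod a * cmod b" by simp
  ultimately have "cmod a * cmod b \<le> (cmod a)^2 + (cmod b)^2" by linarith
  then show ?thesis by (simp add: norm_mult)
qed

lemma sm_l2: "x \<in> l2 \<Longrightarrow> y \<in> l2 \<Longrightarrow> sm x y"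
  unfolding sm_def l2_def
  by (rule summable_comparison_test'[where g="\<lambda>n. (cmod (x n))^2 + (cmod (y n))^2" and N=0])
     (auto intro: summable_add prod_bound)

lemma l2_lin: assumes "x \<in> l2" "y \<in> l2" shows "(\<lambda>n. a * x n + b * y n) \<in> l2"
proof -
  have b: "(cmod (a * x n + b * y n))^2 \<le> 2 * (cmod a)^2 * (cmod (x n))^2 + 2 * (cmod b)^2 * (cmod (y n))^2" for n
  proof -
    have t: "cmod (a * x n + b * y n) \<le> cmod a * cmod (x n) + cmod b * cmod (y n)"
      by (metis norm_mult norm_triangle_ineq)
    have "(cmod (a * x n + b * y n))^2 \<le> (cmod a * cmod (x n) + cmod b * cmod (y n))^2"
      using t by (simp add: power_mono)
    also have "\<dots> \<le> 2 * (cmod a)^2 * (cmod (x n))^2 + 2 * (cmod b)^2 * (cmod (y n))^2"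
    proof -
      have "0 \<le> (cmod a * cmod (x n) - cmod b * cmod (y n))^2" by simp
      then show ?thesis by (simp add: power2_eq_square algebra_simps)
    qed
    finally show ?thesis .
  qed
  have "summable (\<lambda>n. (cmod (a * x n + b * y n))^2)"
    apply (rule summable_comparison_test'[where N=0 and g="\<lambda>n. 2 * (cmod a)^2 * (cmod (x n))^2 + 2 * (cmod b)^2 * (cmod (y n))^2"])
    using assms b by (auto simp: l2_def intro!: summable_add summable_mult)
  then show ?thesis by (simp add: l2_def)
qed

lemma l2_add: "x \<in> l2 \<Longrightarrow> y \<in> l2 \<Longrightarrow> (\<lambda>n. x n + c * y n) \<in> l2"
  using l2_lin[of x y 1 c] by simp

lemma l2_scal: "x \<in> l2 \<Longrightarrow> (\<lambda>n. a * x n) \<in> l2"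
  using l2_lin[of x x a 0] by simp

lemma inner_lin_right:
  assumes "sm x y" "sm x z"
  shows "l2_inner x (\<lambda>n. a * y n + b * z n) = a * l2_inner x y + b * l2_inner x z"
proof -
  have "(\<lambda>n. a * (cnj (x n) * y n) + b * (cnj (x n) * z n)) sums (a * l2_inner x y + b * l2_inner x z)"
    unfolding l2_inner_def
    by (intro sums_add sums_mult summable_sums) (use assms in \<open>auto simp: sm_def\<close>)
  then show ?thesis unfolding l2_inner_def by (simp add: sums_unique[symmetric] algebra_simps)
qed

lemma inner_lin_left:
  assumes "sm x z" "sm y z"
  shows "l2_inner (\<lambda>n. a * x n + b * y n) z = cnj a * l2_inner x z + cnj b * l2_inner y z"
proof -
  have "(\<lambda>n. cnj a * (cnj (x n) * z n) + cnj b * (cnj (y n) * z n)) sums (cnj a * l2_inner x z + cnj b * l2_inner y z)"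
    unfolding l2_inner_def
    by (intro sums_add sums_mult summable_sums) (use assms in \<open>auto simp: sm_def\<close>)
  then show ?thesis unfolding l2_inner_def by (simp add: sums_unique[symmetric] algebra_simps)
qed

lemma inner_add_right: "sm x y \<Longrightarrow> sm x z \<Longrightarrow> l2_inner x (\<lambda>n. y n + c * z n) = l2_inner x y + c * l2_inner x z"
  using inner_lin_right[of x y z 1 c] by simp

lemma inner_add_left: "sm x z \<Longrightarrow> sm y z \<Longrightarrow> l2_inner (\<lambda>n. x n + c * y n) z = l2_inner x z + cnj c * l2_inner y z"
  using inner_lin_left[of x z y 1 c] by simp

lemma inner_scal_right: "sm x y \<Longrightarrow> l2_inner x (\<lambda>n. a * y n) = a * l2_inner x y"
  using inner_lin_right[of x y y a 0] by simp

lemma inner_scal_left: "sm x y \<Longrightarrow> l2_inner (\<lambda>n. a * x n) y = cnj a * l2_inner x y"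
  using inner_lin_left[of x y x a 0] by simp

lemma inner3_left:
  assumes "sm x w" "sm y w" "sm z w"
  shows "l2_inner (\<lambda>n. a * x n + b * y n + z n) w = cnj a * l2_inner x w + cnj b * l2_inner y w + l2_inner z w"
proof -
  have "(\<lambda>n. cnj a * (cnj (x n) * w n) + cnj b * (cnj (y n) * w n) + cnj (z n) * w n) sums (cnj a * l2_inner x w + cnj b * l2_inner y w + l2_inner z w)"
    unfolding l2_inner_def
    by (intro sums_add sums_mult summable_sums) (use assms in \<open>auto simp: sm_def\<close>)
  then show ?thesis unfolding l2_inner_def by (simp add: sums_unique[symmetric] algebra_simps)
qed

lemma inner3_right:
  assumes "sm w x" "sm w y" "sm w z"
  shows "l2_inner w (\<lambda>n. a * x n + b * y n + z n) = a * l2_inner w x + b * l2_inner w y + l2_inner w z"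
proof -
  have "(\<lambda>n. a * (cnj (w n) * x n) + b * (cnj (w n) * y n) + cnj (w n) * z n) sums (a * l2_inner w x + b * l2_inner w y + l2_inner w z)"
    unfolding l2_inner_def
    by (intro sums_add sums_mult summable_sums) (use assms in \<open>auto simp: sm_def\<close>)
  then show ?thesis unfolding l2_inner_def by (simp add: sums_unique[symmetric] algebra_simps)
qed

lemma inner_cnj: assumes "sm x y" shows "l2_inner y x = cnj (l2_inner x y)"
proof -
  have "(\<lambda>n. cnj (cnj (x n) * y n)) sums cnj (l2_inner x y)"
    using assms unfolding sm_def l2_inner_def by (simp only: sums_cnj) (rule summable_sums)
  then show ?thesis unfolding l2_inner_def by (simp add: sums_unique[symmetric] mult.commute)
qed

lemma D0_l2: assumes "x \<in> D0" shows "x \<in> l2"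
proof -
  have "summable (\<lambda>n. (cmod (x n))\<^sup>2)"
    by (rule summable_finite[of "{n. x n \<noteq> 0}"]) (use assms in \<open>auto simp: D0_def\<close>)
  then show ?thesis by (simp add: l2_def)
qed

lemma D0_lin: assumes "x \<in> D0" "y \<in> D0" shows "(\<lambda>n. a * x n + b * y n) \<in> D0"
proof -
  have "{n. a * x n + b * y n \<noteq> 0} \<subseteq> {n. x n \<noteq> 0} \<union> {n. y n \<noteq> 0}" by auto
  then show ?thesis using assms unfolding D0_def by (auto intro: finite_subset)
qed

lemma D0_add: "x \<in> D0 \<Longrightarrow> y \<in> D0 \<Longrightarrow> (\<lambda>n. x n + c * y n) \<in> D0"
  using D0_lin[of x y 1 c] by simp

lemma cre_D0: assumes "x \<in> D0" shows "cre x \<in> D0"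
proof -
  have "{m. cre x m \<noteq> 0} \<subseteq> Suc ` {n. x n \<noteq> 0}"
  proof
    fix m assume "m \<in> {m. cre x m \<noteq> 0}"
    then have "m \<noteq> 0" "x (m - 1) \<noteq> 0" by (auto simp: cre_def split: if_splits)
    then show "m \<in> Suc ` {n. x n \<noteq> 0}" by (intro image_eqI[of _ _ "m - 1"]) auto
  qed
  then show ?thesis using assms unfolding D0_def by (auto intro: finite_subset)
qed

lemma ann_D0: assumes "x \<in> D0" shows "ann x \<in> D0"
proof -
  have "{m. ann x m \<noteq> 0} \<subseteq> Suc -` {n. x n \<noteq> 0}"
    by (auto simp: ann_def)
  moreover have "finite (Suc -` {n. x n \<noteq> 0})"
    using assms unfolding D0_def by (intro finite_vimageI) auto
  ultimately show ?thesis unfolding D0_def by (auto intro: finite_subset)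
qed

lemma funpow_D0: "(\<And>x. x \<in> D0 \<Longrightarrow> g x \<in> D0) \<Longrightarrow> x \<in> D0 \<Longrightarrow> (g ^^ n) x \<in> D0"
  by (induction n) auto

lemma numfun_D0: assumes "x \<in> D0" shows "numfun f x \<in> D0"
proof -
  have "{m. numfun f x m \<noteq> 0} \<subseteq> {n. x n \<noteq> 0}" by (auto simp: numfun_def)
  then show ?thesis using assms unfolding D0_def by (auto intro: finite_subset)
qed

lemma opA_D0: assumes "x \<in> D0" shows "opA k l \<xi> f x \<in> D0"
proof -
  have "(cre ^^ k) ((ann ^^ l) x) \<in> D0" "(cre ^^ l) ((ann ^^ k) x) \<in> D0" "numfun f x \<in> D0"
    using assms by (auto intro!: funpow_D0 cre_D0 ann_D0 numfun_D0)
  moreover have "{m. opA k l \<xi> f x m \<noteq> 0} \<subseteq> {m. (cre ^^ k) ((ann ^^ l) x) m \<noteq> 0}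
     \<union> {m. (cre ^^ l) ((ann ^^ k) x) m \<noteq> 0} \<union> {m. numfun f x m \<noteq> 0}"
    by (auto simp: opA_def)
  ultimately show ?thesis unfolding D0_def by (auto intro: finite_subset)
qed

lemma cre_adj: assumes "x \<in> D0 \<or> y \<in> D0" shows "l2_inner (cre x) y = l2_inner x (ann y)"
proof -
  have s: "summable (\<lambda>m. cnj (cre x m) * y m)"
    using assms cre_D0 sm_D0_left sm_D0_right unfolding sm_def by blast
  have "(\<Sum>n. cnj (cre x (Suc n)) * y (Suc n)) = (\<Sum>m. cnj (cre x m) * y m) - cnj (cre x 0) * y 0"
    using suminf_split_head[OF s] .
  moreover have "cre x 0 = 0" by (simp add: cre_def)
  moreover have "(\<lambda>n. cnj (cre x (Suc n)) * y (Suc n)) = (\<lambda>n. cnj (x n) * ann y n)"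
    by (auto simp: cre_def ann_def)
  ultimately show ?thesis unfolding l2_inner_def by simp
qed

lemma ann_adj: assumes "x \<in> D0 \<or> y \<in> D0" shows "l2_inner (ann x) y = l2_inner x (cre y)"
proof -
  have "l2_inner (ann x) y = cnj (l2_inner y (ann x))"
    using assms ann_D0 sm_D0_left sm_D0_right inner_cnj by metis
  also have "\<dots> = cnj (l2_inner (cre y) x)" using assms cre_adj by metis
  also have "\<dots> = l2_inner x (cre y)"
    using assms cre_D0 sm_D0_left sm_D0_right inner_cnj by metis
  finally show ?thesis .
qed

lemma cre_pow_adj: "y \<in> D0 \<Longrightarrow> l2_inner ((cre ^^ n) x) y = l2_inner x ((ann ^^ n) y)"
proof (induction n arbitrary: y)
  case 0 then show ?case by simp
next
  case (Suc n)
  have "l2_inner ((cre ^^ Suc n) x) y = l2_inner ((cre ^^ n) x) (ann y)"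
    using Suc.prems cre_adj by simp
  also have "\<dots> = l2_inner x ((ann ^^ n) (ann y))" using Suc ann_D0 by blast
  finally show ?case by (simp add: funpow_Suc_right del: funpow.simps)
qed

lemma ann_pow_adj: "y \<in> D0 \<Longrightarrow> l2_inner ((ann ^^ n) x) y = l2_inner x ((cre ^^ n) y)"
proof (induction n arbitrary: y)
  case 0 then show ?case by simp
next
  case (Suc n)
  have "l2_inner ((ann ^^ Suc n) x) y = l2_inner ((ann ^^ n) x) (cre y)"
    using Suc.prems ann_adj by simp
  also have "\<dots> = l2_inner x ((cre ^^ n) (cre y))" using Suc cre_D0 by blast
  finally show ?case by (simp add: funpow_Suc_right del: funpow.simps)
qed

lemma PQ_adj: "\<phi> \<in> D0 \<Longrightarrow> l2_inner ((cre ^^ k) ((ann ^^ l) \<psi>)) \<phi> = l2_inner \<psi> ((cre ^^ l) ((ann ^^ k) \<phi>))"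
  by (simp add: cre_pow_adj ann_pow_adj funpow_D0 ann_D0)

lemma numfun_adj: "l2_inner (numfun f x) y = l2_inner x (numfun f y)"
  unfolding l2_inner_def numfun_def by (simp add: algebra_simps)

lemma opA_adj: assumes "\<phi> \<in> D0"
  shows "l2_inner (opA k l \<xi> f \<psi>) \<phi> = l2_inner \<psi> (opA k l \<xi> f \<phi>)"
proof -
  have d: "(cre ^^ k) ((ann ^^ l) \<phi>) \<in> D0" "(cre ^^ l) ((ann ^^ k) \<phi>) \<in> D0" "numfun f \<phi> \<in> D0"
    using assms by (auto intro!: funpow_D0 cre_D0 ann_D0 numfun_D0)
  have "l2_inner (opA k l \<xi> f \<psi>) \<phi> = cnj \<xi> * l2_inner ((cre ^^ k) ((ann ^^ l) \<psi>)) \<phi>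
      + cnj (cnj \<xi>) * l2_inner ((cre ^^ l) ((ann ^^ k) \<psi>)) \<phi> + l2_inner (numfun f \<psi>) \<phi>"
    unfolding opA_def by (rule inner3_left) (use assms sm_D0_right in auto)
  also have "\<dots> = cnj \<xi> * l2_inner \<psi> ((cre ^^ l) ((ann ^^ k) \<phi>))
      + \<xi> * l2_inner \<psi> ((cre ^^ k) ((ann ^^ l) \<phi>)) + l2_inner \<psi> (numfun f \<phi>)"
    using assms by (simp add: PQ_adj numfun_adj)
  also have "\<dots> = l2_inner \<psi> (opA k l \<xi> f \<phi>)"
    unfolding opA_def by (subst inner3_right) (use d sm_D0_right in auto)
  finally show ?thesis .
qed



definition Cj :: "complex \<Rightarrow> (nat \<Rightarrow> complex) \<Rightarrow> (nat \<Rightarrow> complex)" where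
  "Cj u x = (\<lambda>m. u ^ m * cnj (x m))"

lemma unit_cnj: "cmod u = 1 \<Longrightarrow> cnj u * u = 1"
  using complex_norm_square[of u] by (simp add: mult.commute)

lemma Cj_Cj: assumes "cmod u = 1" shows "Cj u (Cj u x) = x"
proof
  fix m
  have "Cj u (Cj u x) m = (cnj u * u) ^ m * x m"
    by (simp add: Cj_def power_mult_distrib algebra_simps)
  then show "Cj u (Cj u x) m = x m" using unit_cnj[OF assms] by simp
qed

lemma Cj_inner: assumes "cmod u = 1" shows "l2_inner (Cj u x) (Cj u y) = l2_inner y x"
proof -
  have "cnj (Cj u x m) * Cj u y m = (cnj u * u) ^ m * (cnj (y m) * x m)" for m
    by (simp add: Cj_def power_mult_distrib algebra_simps)
  then show ?thesis unfolding l2_inner_def using unit_cnj[OF assms] by simp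
qed

lemma Cj_l2: assumes "cmod u = 1" "x \<in> l2" shows "Cj u x \<in> l2"
  using assms by (simp add: Cj_def l2_def norm_mult norm_power)

lemma Cj_D0: assumes "cmod u = 1" "x \<in> D0" shows "Cj u x \<in> D0"
proof -
  have "u \<noteq> 0" using assms by auto
  then have "{m. Cj u x m \<noteq> 0} = {m. x m \<noteq> 0}" by (auto simp: Cj_def)
  then show ?thesis using assms by (simp add: D0_def)
qed

lemma Cj_lin: "Cj u (\<lambda>n. a * x n + b * y n) = (\<lambda>n. cnj a * Cj u x n + cnj b * Cj u y n)"
  by (simp add: Cj_def fun_eq_iff algebra_simps)

lemma Cj_add: "Cj u (\<lambda>n. x n + c * y n) = (\<lambda>n. Cj u x n + cnj c * Cj u y n)"
  by (simp add: Cj_def fun_eq_iff algebra_simps)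

lemma cre_lin: "cre (\<lambda>n. a * x n + b * y n) = (\<lambda>n. a * cre x n + b * cre y n)"
  by (simp add: cre_def fun_eq_iff algebra_simps)

lemma ann_lin: "ann (\<lambda>n. a * x n + b * y n) = (\<lambda>n. a * ann x n + b * ann y n)"
  by (simp add: ann_def fun_eq_iff algebra_simps)

lemma numfun_lin: "numfun f (\<lambda>n. a * x n + b * y n) = (\<lambda>n. a * numfun f x n + b * numfun f y n)"
  by (simp add: numfun_def fun_eq_iff algebra_simps)

lemma funpow_lin:
  fixes g :: "(nat \<Rightarrow> complex) \<Rightarrow> (nat \<Rightarrow> complex)"
  assumes "\<And>a b x y. g (\<lambda>n. a * x n + b * y n) = (\<lambda>n. a * g x n + b * g y n)"
  shows "(g ^^ N) (\<lambda>n. a * x n + b * y n) = (\<lambda>n. a * (g ^^ N) x n + b * (g ^^ N) y n)"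
  by (induction N) (simp_all add: assms)

lemma funpow_scal:
  fixes g :: "(nat \<Rightarrow> complex) \<Rightarrow> (nat \<Rightarrow> complex)"
  assumes "\<And>a b x y. g (\<lambda>n. a * x n + b * y n) = (\<lambda>n. a * g x n + b * g y n)"
  shows "(g ^^ N) (\<lambda>n. a * x n) = (\<lambda>n. a * (g ^^ N) x n)"
  using funpow_lin[of g N a x 0 x, OF assms] by simp

lemma opA_lin: "opA k l \<xi> f (\<lambda>n. a * x n + b * y n) = (\<lambda>n. a * opA k l \<xi> f x n + b * opA k l \<xi> f y n)"
  by (simp add: opA_def funpow_lin[OF cre_lin] funpow_lin[OF ann_lin] numfun_lin fun_eq_iff algebra_simps)

lemma opA_add: "opA k l \<xi> f (\<lambda>n. x n + c * y n) = (\<lambda>n. opA k l \<xi> f x n + c * opA k l \<xi> f y n)"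
  using opA_lin[of k l \<xi> f 1 x c y] by simp

lemma cre_scal: "cre (\<lambda>n. c * x n) = (\<lambda>n. c * cre x n)"
  by (simp add: cre_def fun_eq_iff)

lemma ann_scal: "ann (\<lambda>n. c * x n) = (\<lambda>n. c * ann x n)"
  by (simp add: ann_def fun_eq_iff)

lemma Cj_cre: "Cj u (cre x) = (\<lambda>m. u * cre (Cj u x) m)"
proof
  fix m show "Cj u (cre x) m = u * cre (Cj u x) m"
    by (cases m) (simp_all add: Cj_def cre_def)
qed

lemma Cj_ann: assumes "cmod u = 1" shows "Cj u (ann x) = (\<lambda>m. cnj u * ann (Cj u x) m)"
proof
  fix m
  have "cnj u * ann (Cj u x) m = (cnj u * u) * (u ^ m * (complex_of_real (sqrt (real (Suc m))) * cnj (x (Suc m))))"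
    by (simp add: Cj_def ann_def algebra_simps)
  then show "Cj u (ann x) m = cnj u * ann (Cj u x) m"
    using unit_cnj[OF assms] by (simp add: Cj_def ann_def)
qed

lemma Cj_crepow: "Cj u ((cre ^^ N) x) = (\<lambda>m. u ^ N * (cre ^^ N) (Cj u x) m)"
proof (induction N)
  case 0 then show ?case by simp
next
  case (Suc N)
  have "Cj u ((cre ^^ Suc N) x) = (\<lambda>m. u * cre (Cj u ((cre ^^ N) x)) m)" by (simp add: Cj_cre)
  also have "\<dots> = (\<lambda>m. u * cre (\<lambda>m. u ^ N * (cre ^^ N) (Cj u x) m) m)" using Suc by simp
  also have "\<dots> = (\<lambda>m. u ^ Suc N * (cre ^^ Suc N) (Cj u x) m)"
    by (simp add: cre_scal mult.assoc)
  finally show ?case .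
qed

lemma Cj_annpow: assumes "cmod u = 1" shows "Cj u ((ann ^^ N) x) = (\<lambda>m. cnj u ^ N * (ann ^^ N) (Cj u x) m)"
proof (induction N)
  case 0 then show ?case by simp
next
  case (Suc N)
  have "Cj u ((ann ^^ Suc N) x) = (\<lambda>m. cnj u * ann (Cj u ((ann ^^ N) x)) m)" by (simp add: Cj_ann[OF assms])
  also have "\<dots> = (\<lambda>m. cnj u * ann (\<lambda>m. cnj u ^ N * (ann ^^ N) (Cj u x) m) m)" using Suc by simp
  also have "\<dots> = (\<lambda>m. cnj u ^ Suc N * (ann ^^ Suc N) (Cj u x) m)"
    by (simp add: ann_scal mult.assoc)
  finally show ?case .
qed

lemma Cj_PQ: assumes "cmod u = 1"
  shows "Cj u ((cre ^^ k) ((ann ^^ l) x)) = (\<lambda>m. (u ^ k * cnj u ^ l) * (cre ^^ k) ((ann ^^ l) (Cj u x)) m)"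
  by (simp add: Cj_crepow Cj_annpow[OF assms] funpow_scal[OF cre_lin] mult.assoc)

lemma Cj_numfun: "Cj u (numfun f x) = numfun f (Cj u x)"
  by (simp add: Cj_def numfun_def fun_eq_iff)

lemma Cj_opA:
  assumes u: "cmod u = 1" and kl: "l \<le> k" and eq: "cnj \<xi> * u ^ (k - l) = \<xi>"
  shows "Cj u (opA k l \<xi> f x) = opA k l \<xi> f (Cj u x)"
proof -
  have uu: "u ^ l * cnj u ^ l = 1" using unit_cnj[OF u]
    by (metis mult.commute power_mult_distrib power_one)
  have c1: "cnj \<xi> * (u ^ k * cnj u ^ l) = \<xi>"
  proof -
    have "u ^ k = u ^ (k - l) * u ^ l" using kl by (simp add: power_add[symmetric])
    then have "cnj \<xi> * (u ^ k * cnj u ^ l) = cnj \<xi> * u ^ (k - l) * (u ^ l * cnj u ^ l)" by simp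
    then show ?thesis using uu eq by simp
  qed
  have c2: "\<xi> * (u ^ l * cnj u ^ k) = cnj \<xi>"
  proof -
    have "cnj (cnj \<xi> * (u ^ k * cnj u ^ l)) = cnj \<xi>" using c1 by simp
    then show ?thesis by (simp add: mult.commute mult.left_commute)
  qed
  have "Cj u (opA k l \<xi> f x) = (\<lambda>m. cnj \<xi> * Cj u ((cre ^^ k) ((ann ^^ l) x)) m
        + cnj (cnj \<xi>) * Cj u ((cre ^^ l) ((ann ^^ k) x)) m + Cj u (numfun f x) m)"
    by (simp add: Cj_def opA_def fun_eq_iff algebra_simps)
  also have "\<dots> = (\<lambda>m. (cnj \<xi> * (u ^ k * cnj u ^ l)) * (cre ^^ k) ((ann ^^ l) (Cj u x)) m
        + (\<xi> * (u ^ l * cnj u ^ k)) * (cre ^^ l) ((ann ^^ k) (Cj u x)) m + numfun f (Cj u x) m)"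
    by (simp add: Cj_PQ[OF u] Cj_numfun mult.assoc)
  also have "\<dots> = opA k l \<xi> f (Cj u x)"
    by (simp add: c1 c2 opA_def)
  finally show ?thesis .
qed

lemma exists_u:
  assumes "l < k"
  shows "\<exists>u. cmod u = 1 \<and> cnj \<xi> * u ^ (k - l) = \<xi>"
proof -
  define \<theta> where "\<theta> = Arg \<xi>"
  define u where "u = cis (2 * \<theta> / real (k - l))"
  have "u ^ (k - l) = cis (real (k - l) * (2 * \<theta> / real (k - l)))"
    unfolding u_def by (rule Complex.DeMoivre)
  also have "real (k - l) * (2 * \<theta> / real (k - l)) = 2 * \<theta>"
    using assms by (simp del: of_nat_diff)
  finally have "u ^ (k - l) = cis (2 * \<theta>)" .
  moreover have "\<xi> = complex_of_real (cmod \<xi>) * cis \<theta>"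
    using rcis_cmod_Arg[of \<xi>] by (simp add: rcis_def \<theta>_def)
  ultimately have "cnj \<xi> * u ^ (k - l) = complex_of_real (cmod \<xi>) * (cis (-\<theta>) * cis (2 * \<theta>))"
    by (metis (no_types, lifting) cis_cnj complex_cnj_complex_of_real complex_cnj_mult mult.assoc)
  also have "\<dots> = \<xi>" using \<open>\<xi> = _\<close> by (simp add: cis_mult)
  finally show ?thesis by (intro exI[of _ u]) (simp add: u_def)
qed



definition orthonormal :: "(nat \<Rightarrow> complex) set \<Rightarrow> bool" where
  "orthonormal B \<longleftrightarrow> (\<forall>b\<in>B. \<forall>b'\<in>B. l2_inner b b' = (if b = b' then 1 else 0))"

lemma inner_self: assumes "x \<in> l2"
  shows "l2_inner x x = complex_of_real (\<Sum>n. (cmod (x n))^2)"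
proof -
  have s: "summable (\<lambda>n. (cmod (x n))^2)" using assms by (simp add: l2_def)
  have "(\<lambda>n. complex_of_real ((cmod (x n))^2)) sums complex_of_real (\<Sum>n. (cmod (x n))^2)"
    using summable_sums[OF s] by (rule sums_of_real_iff[THEN iffD2])
  moreover have "(\<lambda>n. complex_of_real ((cmod (x n))^2)) = (\<lambda>n. cnj (x n) * x n)"
    by (simp only: complex_norm_square mult.commute)
  ultimately show ?thesis unfolding l2_inner_def by (simp add: sums_unique[symmetric])
qed

lemma onb_exists:
  assumes M: "M \<subseteq> l2" and sc: "\<And>x a. x \<in> M \<Longrightarrow> (\<lambda>n. a * x n) \<in> M"
  shows "\<exists>B. is_onb M B"
proof -
  define \<A> where "\<A> = {B. B \<subseteq> M \<and> orthonormal B}"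
  have "\<exists>B\<in>\<A>. \<forall>X\<in>\<A>. B \<subseteq> X \<longrightarrow> X = B"
  proof (rule subset_Zorn')
    fix C assume ch: "subset.chain \<A> C"
    show "\<Union>C \<in> \<A>" unfolding \<A>_def orthonormal_def
    proof (intro CollectI conjI ballI)
      show "\<Union>C \<subseteq> M" using ch by (auto simp: subset_chain_def \<A>_def)
    next
      fix b b' assume "b \<in> \<Union>C" "b' \<in> \<Union>C"
      then obtain X Y where XY: "X \<in> C" "Y \<in> C" "b \<in> X" "b' \<in> Y" by blast
      then have "X \<subseteq> Y \<or> Y \<subseteq> X" using ch by (auto simp: subset_chain_def)
      moreover have "orthonormal X" "orthonormal Y" using ch XY by (auto simp: subset_chain_def \<A>_def)
      ultimately show "l2_inner b b' = (if b = b' then 1 else 0)"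
        using XY unfolding orthonormal_def by blast
    qed
  qed
  then obtain B where B: "B \<in> \<A>" and mx: "\<And>X. X \<in> \<A> \<Longrightarrow> B \<subseteq> X \<Longrightarrow> X = B" by blast
  have "is_onb M B" unfolding is_onb_def
  proof (intro conjI ballI impI)
    show "B \<subseteq> M" using B by (simp add: \<A>_def)
  next
    fix b b' assume "b \<in> B" "b' \<in> B"
    then show "l2_inner b b' = (if b = b' then 1 else 0)" using B by (simp add: \<A>_def orthonormal_def)
  next
    fix \<psi> assume \<psi>: "\<psi> \<in> M" and orth: "\<forall>b\<in>B. l2_inner b \<psi> = 0"
    show "\<psi> = (\<lambda>_. 0)"
    proof (rule ccontr)
      assume "\<psi> \<noteq> (\<lambda>_. 0)"
      then obtain i where i: "\<psi> i \<noteq> 0" by auto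
      have l2\<psi>: "\<psi> \<in> l2" using \<psi> M by auto
      define s where "s = (\<Sum>n. (cmod (\<psi> n))^2)"
      have "0 < s" unfolding s_def
        by (rule suminf_pos2[of _ i]) (use l2\<psi> i in \<open>auto simp: l2_def\<close>)
      define c where "c = complex_of_real (1 / sqrt s)"
      define \<psi>' where "\<psi>' = (\<lambda>n. c * \<psi> n)"
      have \<psi>'M: "\<psi>' \<in> M" using sc \<psi> by (simp add: \<psi>'_def)
      have l2': "\<psi>' \<in> l2" using \<psi>'M M by auto
      have "l2_inner \<psi>' \<psi>' = cnj c * (c * l2_inner \<psi> \<psi>)"
        unfolding \<psi>'_def
        by (simp add: inner_scal_left inner_scal_right sm_l2 l2\<psi> l2_scal)
      also have "\<dots> = 1" using \<open>0 < s\<close>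
        by (simp add: c_def inner_self[OF l2\<psi>] s_def[symmetric] field_simps flip: of_real_mult)
      finally have n1: "l2_inner \<psi>' \<psi>' = 1" .
      have o1: "l2_inner b \<psi>' = 0" if "b \<in> B" for b
      proof -
        have "b \<in> l2" using that B M by (auto simp: \<A>_def)
        then show ?thesis unfolding \<psi>'_def using orth that by (simp add: inner_scal_right sm_l2 l2\<psi>)
      qed
      have o2: "l2_inner \<psi>' b = 0" if "b \<in> B" for b
      proof -
        have "b \<in> l2" using that B M by (auto simp: \<A>_def)
        then have "l2_inner \<psi>' b = cnj (l2_inner b \<psi>')" using inner_cnj sm_l2 l2' by metis
        then show ?thesis using o1 that by simp
      qed
      have nB: "\<psi>' \<notin> B" using o1 n1 by force
      have "insert \<psi>' B \<in> \<A>"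
        using B \<psi>'M o1 o2 n1 unfolding \<A>_def orthonormal_def by auto
      then have "insert \<psi>' B = B" using mx by blast
      then show False using nB by blast
    qed
  qed
  then show ?thesis by blast
qed

lemma defect_l2: "defect_space T c \<subseteq> l2"
  by (auto simp: defect_space_def)

lemma defect_scal:
  assumes "\<psi> \<in> defect_space (opA k l \<xi> f) c"
  shows "(\<lambda>n. a * \<psi> n) \<in> defect_space (opA k l \<xi> f) c"
proof -
  have "\<psi> \<in> l2" using assms by (simp add: defect_space_def)
  moreover have "l2_inner (\<lambda>n. a * \<psi> n) (\<lambda>m. opA k l \<xi> f \<phi> m + c * \<phi> m) = 0" if "\<phi> \<in> D0" for \<phi>
  proof -
    have "(\<lambda>m. opA k l \<xi> f \<phi> m + c * \<phi> m) \<in> D0" using that by (simp add: D0_add opA_D0)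
    then show ?thesis using assms that by (simp add: inner_scal_left sm_D0_right defect_space_def)
  qed
  ultimately show ?thesis by (simp add: defect_space_def l2_scal)
qed

lemma defect_Cj:
  assumes u: "cmod u = 1" and kl: "l \<le> k" and eq: "cnj \<xi> * u ^ (k - l) = \<xi>"
    and \<psi>: "\<psi> \<in> defect_space (opA k l \<xi> f) c"
  shows "Cj u \<psi> \<in> defect_space (opA k l \<xi> f) (cnj c)"
proof -
  have l2: "\<psi> \<in> l2" using \<psi> by (simp add: defect_space_def)
  have "l2_inner (Cj u \<psi>) (\<lambda>m. opA k l \<xi> f \<phi> m + cnj c * \<phi> m) = 0" if \<phi>: "\<phi> \<in> D0" for \<phi>
  proof -
    define w where "w = (\<lambda>m. opA k l \<xi> f \<phi> m + cnj c * \<phi> m)"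
    have cw: "Cj u w = (\<lambda>m. opA k l \<xi> f (Cj u \<phi>) m + c * Cj u \<phi> m)"
      unfolding w_def Cj_add by (simp add: Cj_opA[OF u kl eq])
    have D: "Cj u w \<in> D0" unfolding cw using \<phi> u by (simp add: D0_add opA_D0 Cj_D0)
    have z: "l2_inner \<psi> (Cj u w) = 0" unfolding cw using \<psi> \<phi> u Cj_D0
      by (simp add: defect_space_def)
    have "l2_inner (Cj u \<psi>) w = l2_inner (Cj u \<psi>) (Cj u (Cj u w))" by (simp add: Cj_Cj[OF u])
    also have "\<dots> = l2_inner (Cj u w) \<psi>" by (rule Cj_inner[OF u])
    also have "\<dots> = cnj (l2_inner \<psi> (Cj u w))" using inner_cnj sm_D0_right D by metis
    finally show ?thesis using z by (simp add: w_def)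
  qed
  then show ?thesis using l2 u by (simp add: defect_space_def Cj_l2)
qed



lemma part1:
  assumes u: "cmod u = 1" and kl: "l \<le> k" and eq: "cnj \<xi> * u ^ (k - l) = \<xi>"
  shows "same_hilbert_dim (defect_space (opA k l \<xi> f) \<i>) (defect_space (opA k l \<xi> f) (- \<i>))"
proof -
  let ?M = "defect_space (opA k l \<xi> f) \<i>" and ?N = "defect_space (opA k l \<xi> f) (- \<i>)"
  obtain B where B: "is_onb ?M B"
    using onb_exists[OF defect_l2 defect_scal] by blast
  have MN: "Cj u \<psi> \<in> ?N" if "\<psi> \<in> ?M" for \<psi> using defect_Cj[OF u kl eq that] by simp
  have NM: "Cj u \<psi> \<in> ?M" if "\<psi> \<in> ?N" for \<psi> using defect_Cj[OF u kl eq that] by simp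
  have inj: "inj_on (Cj u) B" by (metis Cj_Cj[OF u] inj_on_inverseI)
  have "is_onb ?N (Cj u ` B)" unfolding is_onb_def
  proof (intro conjI ballI impI)
    show "Cj u ` B \<subseteq> ?N" using B MN by (auto simp: is_onb_def)
  next
    fix c c' assume "c \<in> Cj u ` B" "c' \<in> Cj u ` B"
    then obtain b b' where bb: "b \<in> B" "b' \<in> B" "c = Cj u b" "c' = Cj u b'" by blast
    have "l2_inner c c' = l2_inner b' b" using bb Cj_inner[OF u] by simp
    also have "\<dots> = (if b' = b then 1 else 0)" using B bb by (simp add: is_onb_def)
    also have "(b' = b) = (c = c')" using bb by (metis Cj_Cj[OF u])
    finally show "l2_inner c c' = (if c = c' then 1 else 0)" by simp
  next
    fix \<psi> assume \<psi>: "\<psi> \<in> ?N" and orth: "\<forall>c\<in>Cj u ` B. l2_inner c \<psi> = 0"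
    have l2\<psi>: "\<psi> \<in> l2" using \<psi> by (simp add: defect_space_def)
    have "l2_inner b (Cj u \<psi>) = 0" if b: "b \<in> B" for b
    proof -
      have l2b: "b \<in> l2" using B b defect_l2 by (auto simp: is_onb_def)
      have "l2_inner b (Cj u \<psi>) = l2_inner (Cj u (Cj u b)) (Cj u \<psi>)" by (simp add: Cj_Cj[OF u])
      also have "\<dots> = l2_inner \<psi> (Cj u b)" by (rule Cj_inner[OF u])
      also have "\<dots> = cnj (l2_inner (Cj u b) \<psi>)"
        using inner_cnj sm_l2 Cj_l2[OF u l2b] l2\<psi> by metis
      finally show ?thesis using orth b by simp
    qed
    then have "Cj u \<psi> = (\<lambda>_. 0)" using B NM[OF \<psi>] by (simp add: is_onb_def)
    then have "Cj u (Cj u \<psi>) = (\<lambda>_. 0)" by (simp add: Cj_def)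
    then show "\<psi> = (\<lambda>_. 0)" by (simp add: Cj_Cj[OF u])
  qed
  moreover have "bij_betw (Cj u) B (Cj u ` B)" using inj by (simp add: bij_betw_imageI)
  ultimately show ?thesis using B unfolding same_hilbert_dim_def by blast
qed



lemma unit_vec_D0: "(\<lambda>m. if m = n then 1 else 0) \<in> D0"
proof -
  have "{m. (if m = n then 1 else 0 :: complex) \<noteq> 0} = {n}" by auto
  then show ?thesis by (simp add: D0_def)
qed

lemma inner_unit: "l2_inner x (\<lambda>m. if m = n then 1 else 0) = cnj (x n)"
  unfolding l2_inner_def by (subst suminf_finite[of "{n}"]) auto

lemma part2:
  assumes u: "cmod u = 1" and kl: "l \<le> k" and eq: "cnj \<xi> * u ^ (k - l) = \<xi>"
  shows "\<exists>D T. D0 \<subseteq> D \<and> (\<forall>x\<in>D0. T x = opA k l \<xi> f x) \<and> selfadjoint_op D T"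
proof -
  let ?A = "opA k l \<xi> f"
  have CA: "Cj u (?A x) = ?A (Cj u x)" for x by (rule Cj_opA[OF u kl eq])
  define F where "F = {D. D0 \<subseteq> D \<and> D \<subseteq> l2 \<and> (\<forall>x\<in>D. ?A x \<in> l2)
     \<and> (\<forall>x\<in>D. \<forall>y\<in>D. \<forall>c. (\<lambda>n. x n + c * y n) \<in> D) \<and> (\<forall>x\<in>D. Cj u x \<in> D)
     \<and> (\<forall>x\<in>D. \<forall>y\<in>D. l2_inner x (?A y) = l2_inner (?A x) y)}"
  have D0F: "D0 \<in> F" unfolding F_def
    using D0_l2 opA_D0 D0_add Cj_D0[OF u] opA_adj by (auto simp: opA_adj)
  have "\<exists>D\<in>F. \<forall>X\<in>F. D \<subseteq> X \<longrightarrow> X = D"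
  proof (rule subset_Zorn_nonempty)
    show "F \<noteq> {}" using D0F by blast
  next
    fix C assume ne: "C \<noteq> {}" and ch: "subset.chain F C"
    have CF: "C \<subseteq> F" and tot: "\<And>X Y. X \<in> C \<Longrightarrow> Y \<in> C \<Longrightarrow> X \<subseteq> Y \<or> Y \<subseteq> X"
      using ch by (auto simp: subset_chain_def)
    have two: "\<exists>Z\<in>C. x \<in> Z \<and> y \<in> Z" if "x \<in> \<Union>C" "y \<in> \<Union>C" for x y
      using that tot by blast
    show "\<Union>C \<in> F" unfolding F_def
    proof (intro CollectI conjI ballI allI)
      obtain Z where "Z \<in> C" using ne by blast
      then have "D0 \<subseteq> Z" using CF by (auto simp: F_def)
      then show "D0 \<subseteq> \<Union>C" using \<open>Z \<in> C\<close> by blast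
      show "\<Union>C \<subseteq> l2" using CF by (auto simp: F_def)
    next
      fix x assume "x \<in> \<Union>C" then show "?A x \<in> l2" using CF by (auto simp: F_def)
    next
      fix x assume "x \<in> \<Union>C" then show "Cj u x \<in> \<Union>C" using CF by (auto simp: F_def)
    next
      fix x y c assume "x \<in> \<Union>C" "y \<in> \<Union>C"
      then obtain Z where "Z \<in> C" "x \<in> Z" "y \<in> Z" using two by blast
      moreover have "Z \<in> F" using \<open>Z \<in> C\<close> CF by blast
      ultimately have "(\<lambda>n. x n + c * y n) \<in> Z" by (simp add: F_def)
      then show "(\<lambda>n. x n + c * y n) \<in> \<Union>C" using \<open>Z \<in> C\<close> by blast
    next
      fix x y assume "x \<in> \<Union>C" "y \<in> \<Union>C"
      then obtain Z where "Z \<in> C" "x \<in> Z" "y \<in> Z" using two by blast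
      then show "l2_inner x (?A y) = l2_inner (?A x) y" using CF by (auto simp: F_def)
    qed
  qed
  then obtain D where DF: "D \<in> F" and mx: "\<And>X. X \<in> F \<Longrightarrow> D \<subseteq> X \<Longrightarrow> X = D" by blast
  have D0D: "D0 \<subseteq> D" and Dl2: "D \<subseteq> l2" and DA: "\<And>x. x \<in> D \<Longrightarrow> ?A x \<in> l2"
    and Dsub: "\<And>x y c. x \<in> D \<Longrightarrow> y \<in> D \<Longrightarrow> (\<lambda>n. x n + c * y n) \<in> D"
    and DC: "\<And>x. x \<in> D \<Longrightarrow> Cj u x \<in> D"
    and Dsym: "\<And>x y. x \<in> D \<Longrightarrow> y \<in> D \<Longrightarrow> l2_inner x (?A y) = l2_inner (?A x) y"
    using DF by (auto simp: F_def)
  define P where "P \<psi> \<longleftrightarrow> \<psi> \<in> l2 \<and> ?A \<psi> \<in> l2 \<and> (\<forall>\<phi>\<in>D. l2_inner \<psi> (?A \<phi>) = l2_inner (?A \<psi>) \<phi>)" for \<psi>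
  have real_in: "h \<in> D" if Ph: "P h" and r: "Cj u h = h" for h
  proof (rule ccontr)
    assume nD: "h \<notin> D"
    have l2h: "h \<in> l2" and l2Ah: "?A h \<in> l2"
      and adjh: "\<And>\<phi>. \<phi> \<in> D \<Longrightarrow> l2_inner h (?A \<phi>) = l2_inner (?A h) \<phi>"
      using Ph by (auto simp: P_def)
    have adjh': "l2_inner x (?A h) = l2_inner (?A x) h" if "x \<in> D" for x
    proof -
      have lx: "x \<in> l2" "?A x \<in> l2" using that Dl2 DA by auto
      have "l2_inner x (?A h) = cnj (l2_inner (?A h) x)" using inner_cnj sm_l2 lx l2Ah by metis
      also have "\<dots> = cnj (l2_inner h (?A x))" using adjh that by simp
      also have "\<dots> = l2_inner (?A x) h" using inner_cnj sm_l2 lx l2h by metis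
      finally show ?thesis .
    qed
    have selfh: "l2_inner h (?A h) = l2_inner (?A h) h"
    proof -
      have "l2_inner (Cj u h) (Cj u (?A h)) = l2_inner (?A h) h" by (rule Cj_inner[OF u])
      then show ?thesis using r by (simp add: CA)
    qed
    define D' where "D' = {w. \<exists>x c. x \<in> D \<and> w = (\<lambda>n. x n + c * h n)}"
    have D'F: "D' \<in> F" unfolding F_def
    proof (intro CollectI conjI ballI allI)
      show "D0 \<subseteq> D'"
      proof
        fix x assume "x \<in> D0"
        then show "x \<in> D'" unfolding D'_def using D0D by (intro CollectI exI[of _ x] exI[of _ 0]) auto
      qed
    next
      show "D' \<subseteq> l2" using Dl2 l2h by (auto simp: D'_def intro!: l2_add)
    next
      fix w assume "w \<in> D'"
      then obtain x c where "x \<in> D" "w = (\<lambda>n. x n + c * h n)" by (auto simp: D'_def)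
      then show "?A w \<in> l2" using DA l2Ah by (simp add: opA_add l2_add)
    next
      fix w assume "w \<in> D'"
      then obtain x c where xc: "x \<in> D" "w = (\<lambda>n. x n + c * h n)" by (auto simp: D'_def)
      then have "Cj u w = (\<lambda>n. Cj u x n + cnj c * h n)" using r by (simp add: Cj_add)
      then show "Cj u w \<in> D'" unfolding D'_def using DC xc by blast
    next
      fix w v e assume "w \<in> D'" "v \<in> D'"
      then obtain x c y d where xc: "x \<in> D" "w = (\<lambda>n. x n + c * h n)" and yd: "y \<in> D" "v = (\<lambda>n. y n + d * h n)"
        by (auto simp: D'_def)
      have "(\<lambda>n. w n + e * v n) = (\<lambda>n. (\<lambda>n. x n + e * y n) n + (c + e * d) * h n)"
        using xc yd by (auto simp: fun_eq_iff algebra_simps)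
      then show "(\<lambda>n. w n + e * v n) \<in> D'" unfolding D'_def using Dsub xc yd by blast
    next
      fix w v assume "w \<in> D'" "v \<in> D'"
      then obtain x c y d where xc: "x \<in> D" "w = (\<lambda>n. x n + c * h n)" and yd: "y \<in> D" "v = (\<lambda>n. y n + d * h n)"
        by (auto simp: D'_def)
      have lx: "x \<in> l2" "?A x \<in> l2" "y \<in> l2" "?A y \<in> l2" using xc yd Dl2 DA by auto
      have l2s: "(\<lambda>n. x n + c * h n) \<in> l2" "(\<lambda>n. ?A x n + c * ?A h n) \<in> l2"
        using lx l2h l2Ah by (auto intro: l2_add)
      have "l2_inner w (?A v) = l2_inner (\<lambda>n. x n + c * h n) (\<lambda>n. ?A y n + d * ?A h n)"
        using xc yd by (simp add: opA_add)
      also have "\<dots> = l2_inner (\<lambda>n. x n + c * h n) (?A y) + d * l2_inner (\<lambda>n. x n + c * h n) (?A h)"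
        using l2s lx l2Ah by (simp add: inner_add_right sm_l2)
      also have "\<dots> = (l2_inner x (?A y) + cnj c * l2_inner h (?A y))
                     + d * (l2_inner x (?A h) + cnj c * l2_inner h (?A h))"
        using lx l2h l2Ah by (simp add: inner_add_left sm_l2)
      also have "\<dots> = (l2_inner (?A x) y + cnj c * l2_inner (?A h) y)
                     + d * (l2_inner (?A x) h + cnj c * l2_inner (?A h) h)"
        using Dsym xc yd adjh adjh' selfh by simp
      also have "\<dots> = l2_inner (\<lambda>n. ?A x n + c * ?A h n) y + d * l2_inner (\<lambda>n. ?A x n + c * ?A h n) h"
        using lx l2h l2Ah by (simp add: inner_add_left sm_l2)
      also have "\<dots> = l2_inner (\<lambda>n. ?A x n + c * ?A h n) (\<lambda>n. y n + d * h n)"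
        using l2s lx l2h by (simp add: inner_add_right sm_l2)
      also have "\<dots> = l2_inner (?A w) v" using xc yd by (simp add: opA_add)
      finally show "l2_inner w (?A v) = l2_inner (?A w) v" .
    qed
    have "D \<subseteq> D'"
    proof
      fix x assume "x \<in> D"
      then show "x \<in> D'" unfolding D'_def by (intro CollectI exI[of _ x] exI[of _ 0]) auto
    qed
    moreover have "h \<in> D'"
    proof -
      have "(\<lambda>n. 0 :: complex) \<in> D" using D0D by (auto simp: D0_def)
      then show ?thesis unfolding D'_def by (intro CollectI exI[of _ "\<lambda>n. 0"] exI[of _ 1]) auto
    qed
    ultimately show False using mx[OF D'F] nD by blast
  qed
  have PC: "P (Cj u \<psi>)" if "P \<psi>" for \<psi>
  proof -
    have l: "\<psi> \<in> l2" "?A \<psi> \<in> l2" and adj: "\<And>\<phi>. \<phi> \<in> D \<Longrightarrow> l2_inner \<psi> (?A \<phi>) = l2_inner (?A \<psi>) \<phi>"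
      using that by (auto simp: P_def)
    have "l2_inner (Cj u \<psi>) (?A \<phi>) = l2_inner (?A (Cj u \<psi>)) \<phi>" if \<phi>: "\<phi> \<in> D" for \<phi>
    proof -
      have l\<phi>: "Cj u \<phi> \<in> l2" "?A (Cj u \<phi>) \<in> l2" using DC[OF \<phi>] Dl2 DA by auto
      have "l2_inner (Cj u \<psi>) (?A \<phi>) = l2_inner (Cj u \<psi>) (Cj u (Cj u (?A \<phi>)))" by (simp add: Cj_Cj[OF u])
      also have "\<dots> = l2_inner (?A (Cj u \<phi>)) \<psi>" by (rule trans[OF Cj_inner[OF u]]) (simp add: CA)
      also have "\<dots> = cnj (l2_inner \<psi> (?A (Cj u \<phi>)))" using inner_cnj sm_l2 l l\<phi> by metis
      also have "\<dots> = cnj (l2_inner (?A \<psi>) (Cj u \<phi>))" using adj DC[OF \<phi>] by simp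
      also have "\<dots> = l2_inner (Cj u \<phi>) (?A \<psi>)" using inner_cnj sm_l2 l l\<phi> by metis
      also have "\<dots> = l2_inner (Cj u (?A \<psi>)) (Cj u (Cj u \<phi>))" by (simp add: Cj_inner[OF u])
      also have "\<dots> = l2_inner (?A (Cj u \<psi>)) \<phi>" by (simp add: Cj_Cj[OF u] CA)
      finally show ?thesis .
    qed
    then show ?thesis using l u by (simp add: P_def Cj_l2 flip: CA)
  qed
  have PL: "P (\<lambda>n. a * x n + b * y n)" if "P x" "P y" for x y a b
  proof -
    have l: "x \<in> l2" "?A x \<in> l2" "y \<in> l2" "?A y \<in> l2"
      and ax: "\<And>\<phi>. \<phi> \<in> D \<Longrightarrow> l2_inner x (?A \<phi>) = l2_inner (?A x) \<phi>"
      and ay: "\<And>\<phi>. \<phi> \<in> D \<Longrightarrow> l2_inner y (?A \<phi>) = l2_inner (?A y) \<phi>"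
      using that by (auto simp: P_def)
    have "l2_inner (\<lambda>n. a * x n + b * y n) (?A \<phi>) = l2_inner (?A (\<lambda>n. a * x n + b * y n)) \<phi>"
      if \<phi>: "\<phi> \<in> D" for \<phi>
    proof -
      have l\<phi>: "\<phi> \<in> l2" "?A \<phi> \<in> l2" using \<phi> Dl2 DA by auto
      show ?thesis using l l\<phi> ax ay \<phi> by (simp add: opA_lin inner_lin_left sm_l2)
    qed
    then show ?thesis using l by (simp add: P_def opA_lin l2_lin)
  qed
  have P_in: "\<psi> \<in> D" if "P \<psi>" for \<psi>
  proof -
    define \<psi>1 where "\<psi>1 = (\<lambda>n. (1/2) * \<psi> n + (1/2) * Cj u \<psi> n)"
    define \<psi>2 where "\<psi>2 = (\<lambda>n. (- \<i>/2) * \<psi> n + (\<i>/2) * Cj u \<psi> n)"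
    have "P \<psi>1" "P \<psi>2" unfolding \<psi>1_def \<psi>2_def using PL PC that by blast+
    moreover have "Cj u \<psi>1 = \<psi>1" unfolding \<psi>1_def Cj_lin using Cj_Cj[OF u]
      by (simp add: fun_eq_iff)
    moreover have "Cj u \<psi>2 = \<psi>2" unfolding \<psi>2_def Cj_lin using Cj_Cj[OF u]
      by (simp add: fun_eq_iff)
    ultimately have "\<psi>1 \<in> D" "\<psi>2 \<in> D" using real_in by auto
    then have "(\<lambda>n. \<psi>1 n + \<i> * \<psi>2 n) \<in> D" by (rule Dsub)
    moreover have "(\<lambda>n. \<psi>1 n + \<i> * \<psi>2 n) = \<psi>"
      by (simp add: \<psi>1_def \<psi>2_def fun_eq_iff field_simps)
    ultimately show ?thesis by simp
  qed
  have "selfadjoint_op D ?A" unfolding selfadjoint_op_def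
  proof (intro conjI ballI allI)
    show "D \<subseteq> l2" by (rule Dl2)
  next
    fix x assume "x \<in> D" then show "?A x \<in> l2" by (rule DA)
  next
    fix x y c assume "x \<in> D" "y \<in> D"
    then show "(\<lambda>n. x n + c * y n) \<in> D" by (rule Dsub)
  next
    fix x y c show "?A (\<lambda>n. x n + c * y n) = (\<lambda>n. ?A x n + c * ?A y n)" by (rule opA_add)
  next
    fix \<psi> \<phi> assume "\<psi> \<in> D" "\<phi> \<in> D" then show "l2_inner \<psi> (?A \<phi>) = l2_inner (?A \<psi>) \<phi>" by (rule Dsym)
  next
    fix \<psi> assume l2\<psi>: "\<psi> \<in> l2"
    show "\<psi> \<in> D \<longleftrightarrow> (\<exists>\<eta>\<in>l2. \<forall>\<phi>\<in>D. l2_inner \<psi> (?A \<phi>) = l2_inner \<eta> \<phi>)"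
    proof
      assume "\<psi> \<in> D" then show "\<exists>\<eta>\<in>l2. \<forall>\<phi>\<in>D. l2_inner \<psi> (?A \<phi>) = l2_inner \<eta> \<phi>"
        using DA Dsym by blast
    next
      assume "\<exists>\<eta>\<in>l2. \<forall>\<phi>\<in>D. l2_inner \<psi> (?A \<phi>) = l2_inner \<eta> \<phi>"
      then obtain \<eta> where \<eta>: "\<eta> \<in> l2" "\<And>\<phi>. \<phi> \<in> D \<Longrightarrow> l2_inner \<psi> (?A \<phi>) = l2_inner \<eta> \<phi>" by blast
      have "\<eta> = ?A \<psi>"
      proof
        fix n :: nat
        let ?e = "\<lambda>m. if m = n then 1 else (0::complex)"
        have "cnj (\<eta> n) = l2_inner \<eta> ?e" by (simp add: inner_unit)
        also have "\<dots> = l2_inner \<psi> (?A ?e)" using \<eta>(2)[of ?e] unit_vec_D0[of n] D0D by auto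
        also have "\<dots> = l2_inner (?A \<psi>) ?e" using opA_adj[OF unit_vec_D0] by simp
        also have "\<dots> = cnj (?A \<psi> n)" by (simp add: inner_unit)
        finally show "\<eta> n = ?A \<psi> n" by simp
      qed
      then have "P \<psi>" using \<eta> l2\<psi> by (simp add: P_def)
      then show "\<psi> \<in> D" by (rule P_in)
    qed
  qed
  then show ?thesis using D0D by blast
qed


theorem proposition4p1:
  fixes k l :: nat and \<xi> :: complex and f :: "nat \<Rightarrow> real"
  assumes "l < k" and "\<And>n. f n \<ge> 0"
  shows "same_hilbert_dim (defect_space (opA k l \<xi> f) \<i>) (defect_space (opA k l \<xi> f) (- \<i>))
         \<and> (\<exists>D T. D0 \<subseteq> D \<and> (\<forall>x\<in>D0. T x = opA k l \<xi> f x) \<and> selfadjoint_op D T)"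
proof -
  obtain u where u: "cmod u = 1" "cnj \<xi> * u ^ (k - l) = \<xi>"
    using exists_u[OF assms(1)] by blast
  have kl: "l \<le> k" using assms(1) by simp
  show ?thesis using part1[OF u(1) kl u(2)] part2[OF u(1) kl u(2)] by blast
qed

end
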